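(* Let $A=A_{\bar 0}\oplus A_{\bar 1}$ be a finite-dimensional associative superalgebra over an algebraically closed field $\mathbb{K}$ of characteristic zero. Then $A$ admits an even-symmetric structure if and only if there exist two isomorphisms of $A_{\bar 0}$-bimodules $\phi_{\bar 0}:A_{\bar 0}\to A_{\bar 0}^*$ and $\phi_{\bar 1}:A_{\bar 1}\to A_{\bar 1}^*$ such that $$\phi_i(x)(y)=(-1)^i\phi_i(y)(x)\quad\text{for all } x,y\in A_i,\ i\in\{\bar 0,\bar 1\},$$ $$\phi_{\bar 1}(x.y)(z)=\phi_{\bar 0}(x)(y.z)\quad\text{for all } x\in A_{\bar 0},\ y,z\in A_{\bar 1}.$$
   Context: A superalgebra is a $\mathbb{Z}_2$-graded algebra $A=A_{\bar 0}\oplus A_{\bar 1}$ with $A_\alpha A_\beta\subseteq A_{\alpha+\beta}$; it is associative if it is associative as an algebra; $|x|$ denotes the degree of a homogeneous element $x$. A bilinear form $B$ on $A$ is even if $B(A_{\bar 0},A_{\bar 1})=\{0\}$ (so also $B(A_{\bar 1},A_{\bar 0})=\{0\}$), and odd if $B(A_{\bar 0},A_{\bar 0})=B(A_{\bar 1},A_{\bar 1})=\{0\}$. $B$ is supersymmetric if $B(x,y)=(-1)^{|x||y|}B(y,x)$ for homogeneous $x,y$, associative if $B(x.y,z)=B(x,y.z)$ for all $x,y,z$, and non-degenerate if $B(x,A)=\{0\}$ implies $x=0$. An even-symmetric (resp. odd-symmetric) structure on $A$ is an even (resp. odd), supersymmetric, associative, non-degenerate bilinear form on $A$. For $i\in\{\bar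 0,\bar 1\}$, $A_i$ is an $A_{\bar 0}$-bimodule via left and right multiplication, and $A_i^*$ is an $A_{\bar 0}$-bimodule via $(x\cdot f)(y)=f(y.x)$ and $(f\cdot x)(y)=f(x.y)$ for $x\in A_{\bar 0}$, $f\in A_i^*$, $y\in A_i$. In the formula $(-1)^i$, $i$ is read as $0$ or $1$. *)

theory Defs
  imports "HOL-Computational_Algebra.Polynomial"
begin

definition alg_closed :: "'k::field itself \<Rightarrow> bool" where
  "alg_closed _ \<longleftrightarrow> (\<forall>p::'k poly. degree p > 0 \<longrightarrow> (\<exists>x. poly p x = 0))"

definition fin_dim :: "('k::field \<Rightarrow> 'a::ab_group_add \<Rightarrow> 'a) \<Rightarrow> bool" where
  "fin_dim scal \<longleftrightarrow> vector_space scal \<and> (\<exists>B. finite B \<and> module.span scal B = UNIV)"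

definition assoc_superalgebra ::
  "('k::field \<Rightarrow> 'a::ab_group_add \<Rightarrow> 'a) \<Rightarrow> ('a \<Rightarrow> 'a \<Rightarrow> 'a) \<Rightarrow> 'a set \<Rightarrow> 'a set \<Rightarrow> bool" where
  "assoc_superalgebra scal mul A0 A1 \<longleftrightarrow>
     vector_space scal \<and>
     (\<forall>x y z. mul (x + y) z = mul x z + mul y z) \<and>
     (\<forall>x y z. mul x (y + z) = mul x y + mul x z) \<and>
     (\<forall>c x y. mul (scal c x) y = scal c (mul x y)) \<and>
     (\<forall>c x y. mul x (scal c y) = scal c (mul x y)) \<and>
     (\<forall>x y z. mul (mul x y) z = mul x (mul y z)) \<and>
     module.subspace scal A0 \<and> module.subspace scal A1 \<and>
     A0 \<inter> A1 = {0} \<and> (\<forall>x. \<exists>a\<in>A0. \<exists>b\<in>A1. x = a + b) \<and>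
     (\<forall>x\<in>A0. \<forall>y\<in>A0. mul x y \<in> A0) \<and>
     (\<forall>x\<in>A0. \<forall>y\<in>A1. mul x y \<in> A1) \<and>
     (\<forall>x\<in>A1. \<forall>y\<in>A0. mul x y \<in> A1) \<and>
     (\<forall>x\<in>A1. \<forall>y\<in>A1. mul x y \<in> A0)"

definition even_symmetric_structure ::
  "('k::field \<Rightarrow> 'a::ab_group_add \<Rightarrow> 'a) \<Rightarrow> ('a \<Rightarrow> 'a \<Rightarrow> 'a) \<Rightarrow> 'a set \<Rightarrow> 'a set
     \<Rightarrow> ('a \<Rightarrow> 'a \<Rightarrow> 'k) \<Rightarrow> bool" where
  "even_symmetric_structure scal mul A0 A1 B \<longleftrightarrow>
     \<comment> \<open>bilinear\<close>
     (\<forall>x y z. B (x + y) z = B x z + B y z) \<and>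
     (\<forall>x y z. B x (y + z) = B x y + B x z) \<and>
     (\<forall>c x y. B (scal c x) y = c * B x y) \<and>
     (\<forall>c x y. B x (scal c y) = c * B x y) \<and>
     \<comment> \<open>even\<close>
     (\<forall>x\<in>A0. \<forall>y\<in>A1. B x y = 0) \<and>
     (\<forall>x\<in>A1. \<forall>y\<in>A0. B x y = 0) \<and>
     \<comment> \<open>supersymmetric (on homogeneous elements)\<close>
     (\<forall>x\<in>A0. \<forall>y\<in>A0 \<union> A1. B x y = B y x) \<and>
     (\<forall>x\<in>A1. \<forall>y\<in>A0. B x y = B y x) \<and>
     (\<forall>x\<in>A1. \<forall>y\<in>A1. B x y = - B y x) \<and>
     \<comment> \<open>associative\<close>
     (\<forall>x y z. B (mul x y) z = B x (mul y z)) \<and>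
     \<comment> \<open>non-degenerate\<close>
     (\<forall>x. (\<forall>y. B x y = 0) \<longrightarrow> x = 0)"

text \<open>f is a linear functional on the subspace S (an element of S^*, represented by
  its values on S).\<close>
definition lin_functional_on ::
  "('k::field \<Rightarrow> 'a::ab_group_add \<Rightarrow> 'a) \<Rightarrow> 'a set \<Rightarrow> ('a \<Rightarrow> 'k) \<Rightarrow> bool" where
  "lin_functional_on scal S f \<longleftrightarrow>
     (\<forall>x\<in>S. \<forall>y\<in>S. f (x + y) = f x + f y) \<and> (\<forall>c. \<forall>x\<in>S. f (scal c x) = c * f x)"

text \<open>phi : Ai \<rightarrow> Ai^* is an isomorphism of A0-bimodules, where Ai^* carries the actions
  (x.f)(y) = f(y.x) and (f.x)(y) = f(x.y).  Elements of Ai^* are identified with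
  their restrictions to Ai.\<close>
definition bimodule_iso_to_dual ::
  "('k::field \<Rightarrow> 'a::ab_group_add \<Rightarrow> 'a) \<Rightarrow> ('a \<Rightarrow> 'a \<Rightarrow> 'a) \<Rightarrow> 'a set \<Rightarrow> 'a set
     \<Rightarrow> ('a \<Rightarrow> 'a \<Rightarrow> 'k) \<Rightarrow> bool" where
  "bimodule_iso_to_dual scal mul A0 Ai phi \<longleftrightarrow>
     \<comment> \<open>well-defined into Ai^*\<close>
     (\<forall>x\<in>Ai. lin_functional_on scal Ai (phi x)) \<and>
     \<comment> \<open>linear\<close>
     (\<forall>x\<in>Ai. \<forall>y\<in>Ai. \<forall>z\<in>Ai. phi (x + y) z = phi x z + phi y z) \<and>
     (\<forall>c. \<forall>x\<in>Ai. \<forall>z\<in>Ai. phi (scal c x) z = c * phi x z) \<and>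
     \<comment> \<open>injective\<close>
     (\<forall>x\<in>Ai. (\<forall>z\<in>Ai. phi x z = 0) \<longrightarrow> x = 0) \<and>
     \<comment> \<open>surjective onto Ai^*\<close>
     (\<forall>f. lin_functional_on scal Ai f \<longrightarrow> (\<exists>x\<in>Ai. \<forall>z\<in>Ai. phi x z = f z)) \<and>
     \<comment> \<open>A0-bimodule map\<close>
     (\<forall>a\<in>A0. \<forall>x\<in>Ai. \<forall>y\<in>Ai. phi (mul a x) y = phi x (mul y a)) \<and>
     (\<forall>a\<in>A0. \<forall>x\<in>Ai. \<forall>y\<in>Ai. phi (mul x a) y = phi x (mul a y))"

end

theory Submission
  imports Defs
begin


context vector_space begin

lemma lf_zero: "lin_functional_on scale S g \<Longrightarrow> 0 \<in> S \<Longrightarrow> g 0 = 0"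
  unfolding lin_functional_on_def by (metis mult_zero_left scale_zero_left)

lemma lf_ext:
  assumes S: "subspace S" and Bs: "Bs \<subseteq> S" "span Bs = S"
    and g: "lin_functional_on scale S g" and h: "lin_functional_on scale S h"
    and eq: "\<forall>b\<in>Bs. g b = h b"
  shows "\<forall>z\<in>S. g z = h z"
proof
  fix z assume z: "z \<in> S"
  have sub: "subspace {z. z \<in> S \<and> g z = h z}"
  proof (rule subspaceI)
    show "0 \<in> {z. z \<in> S \<and> g z = h z}" using lf_zero[OF g] lf_zero[OF h] subspace_0[OF S] by simp
  next
    fix x y assume "x \<in> {z. z \<in> S \<and> g z = h z}" "y \<in> {z. z \<in> S \<and> g z = h z}"
    thus "x + y \<in> {z. z \<in> S \<and> g z = h z}" using g h S subspace_add unfolding lin_functional_on_def by auto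
  next
    fix c x assume "x \<in> {z. z \<in> S \<and> g z = h z}"
    thus "c *s x \<in> {z. z \<in> S \<and> g z = h z}" using g h S subspace_scale unfolding lin_functional_on_def by auto
  qed
  have "z \<in> span Bs" using z Bs by simp
  then have "z \<in> S \<and> g z = h z"
    by (rule span_induct) (use sub Bs eq in auto)
  thus "g z = h z" by simp
qed

lemma coeff_eq:
  assumes "finite Bs" "independent Bs"
    and "(\<Sum>b\<in>Bs. u b *s b) = (\<Sum>b\<in>Bs. v b *s b)" and "b \<in> Bs"
  shows "u b = v b"
proof -
  have "(\<Sum>b\<in>Bs. (u b - v b) *s b) = 0"
    using assms(3) by (simp add: scale_left_diff_distrib sum_subtractf)
  then have "u b - v b = 0"
    using independentD[OF assms(2) assms(1) order_refl _ assms(4), of "\<lambda>b. u b - v b"] by simp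
  thus ?thesis by simp
qed

end

context finite_dimensional_vector_space begin

lemma dual_surj:
  assumes S: "subspace S"
    and l1: "\<And>x y z. Bf (x+y) z = Bf x z + Bf y z"
    and l2: "\<And>c x z. Bf (scale c x) z = c * Bf x z"
    and lin2: "\<forall>x\<in>S. lin_functional_on scale S (Bf x)"
    and inj: "\<forall>x\<in>S. (\<forall>z\<in>S. Bf x z = 0) \<longrightarrow> x = 0"
    and f: "lin_functional_on scale S f"
  shows "\<exists>x\<in>S. \<forall>z\<in>S. Bf x z = f z"
proof -
  obtain Bs where Bs: "finite Bs" "Bs \<subseteq> S" "independent Bs" "span Bs = S"
    using basis_subspace_exists[OF S] by metis
  define L where "L x = (\<Sum>b\<in>Bs. Bf x b *s b)" for x
  have linL: "Vector_Spaces.linear scale scale L"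
    unfolding Vector_Spaces.linear_iff L_def
    by (auto simp: vector_space_axioms l1 l2 scale_left_distrib sum.distrib scale_sum_right scale_scale)
  interpret P: finite_dimensional_vector_space_pair_1 scale Basis scale
    by unfold_locales
  interpret L: Vector_Spaces.linear scale scale L by (rule linL)
  have LS: "L ` S \<subseteq> S" unfolding L_def using Bs S
    by (auto intro!: subspace_sum subspace_scale)
  have injL: "inj_on L S"
  proof (rule inj_onI)
    fix x y assume xy: "x \<in> S" "y \<in> S" "L x = L y"
    let ?w = "x - y"
    have w: "?w \<in> S" using xy S subspace_diff by blast
    have "L ?w = 0" using xy by (simp add: L.diff)
    then have "(\<Sum>b\<in>Bs. Bf ?w b *s b) = (\<Sum>b\<in>Bs. (\<lambda>_. 0) b *s b)" by (simp add: L_def)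
    then have "\<forall>b\<in>Bs. Bf ?w b = 0" using coeff_eq[OF Bs(1,3), of "\<lambda>b. Bf ?w b" "\<lambda>_. 0"] by blast
    then have "\<forall>z\<in>S. Bf ?w z = (\<lambda>_. 0) z"
    proof -
      have "lin_functional_on scale S (\<lambda>_. 0)" by (simp add: lin_functional_on_def)
      moreover have "lin_functional_on scale S (Bf ?w)" using lin2 w by blast
      ultimately show ?thesis using lf_ext[OF S Bs(2,4), of "Bf ?w" "\<lambda>_. 0"] \<open>\<forall>b\<in>Bs. Bf ?w b = 0\<close> by blast
    qed
    then show "x = y" using inj w by auto
  qed
  have "dim (L ` S) = dim S"
  proof -
    have "span S = S" using S by simp
    then have "inj_on L (span S)" using injL by (simp only:)
    thus ?thesis using P.dim_image_eq[OF linL, of S] by blast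
  qed
  then have LSe: "L ` S = S"
    using subspace_dim_equal[of "L ` S" S] L.subspace_image[OF S] LS S by simp
  define v where "v = (\<Sum>b\<in>Bs. f b *s b)"
  have "v \<in> S" unfolding v_def using Bs S by (auto intro!: subspace_sum subspace_scale)
  then obtain x where x: "x \<in> S" "L x = v" using LSe by (metis imageE)
  then have "\<forall>b\<in>Bs. Bf x b = f b" using coeff_eq[OF Bs(1,3), of "\<lambda>b. Bf x b" f] unfolding L_def v_def by blast
  then have "\<forall>z\<in>S. Bf x z = f z" using lf_ext[OF S Bs(2,4)] lin2 x f by auto
  thus ?thesis using x by blast
qed

end


lemma backward:
  fixes scal :: "'k::field \<Rightarrow> 'a::ab_group_add \<Rightarrow> 'a"
  assumes SA: "assoc_superalgebra scal mul A0 A1"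
    and I0: "bimodule_iso_to_dual scal mul A0 A0 phi0"
    and I1: "bimodule_iso_to_dual scal mul A0 A1 phi1"
    and sym0: "\<forall>x\<in>A0. \<forall>y\<in>A0. phi0 x y = phi0 y x"
    and asym1: "\<forall>x\<in>A1. \<forall>y\<in>A1. phi1 x y = - phi1 y x"
    and comp: "\<forall>x\<in>A0. \<forall>y\<in>A1. \<forall>z\<in>A1. phi1 (mul x y) z = phi0 x (mul y z)"
  shows "\<exists>B. even_symmetric_structure scal mul A0 A1 B"
proof -
  interpret V: vector_space scal using SA unfolding assoc_superalgebra_def by auto
  have madd1: "\<And>x y z. mul (x + y) z = mul x z + mul y z"
    using SA unfolding assoc_superalgebra_def by auto
  have madd2: "\<And>x y z. mul x (y + z) = mul x y + mul x z"
    using SA unfolding assoc_superalgebra_def by auto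
  have S0: "V.subspace A0"
    using SA unfolding assoc_superalgebra_def by auto
  have S1: "V.subspace A1"
    using SA unfolding assoc_superalgebra_def by auto
  have int: "A0 \<inter> A1 = {0}"
    using SA unfolding assoc_superalgebra_def by auto
  have dec: "\<And>x. \<exists>a\<in>A0. \<exists>b\<in>A1. x = a + b"
    using SA unfolding assoc_superalgebra_def by auto
  have m00: "\<And>x y. x \<in> A0 \<Longrightarrow> y \<in> A0 \<Longrightarrow> mul x y \<in> A0"
    using SA unfolding assoc_superalgebra_def by auto
  have m01: "\<And>x y. x \<in> A0 \<Longrightarrow> y \<in> A1 \<Longrightarrow> mul x y \<in> A1"
    using SA unfolding assoc_superalgebra_def by auto
  have m10: "\<And>x y. x \<in> A1 \<Longrightarrow> y \<in> A0 \<Longrightarrow> mul x y \<in> A1"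
    using SA unfolding assoc_superalgebra_def by auto
  have m11: "\<And>x y. x \<in> A1 \<Longrightarrow> y \<in> A1 \<Longrightarrow> mul x y \<in> A0"
    using SA unfolding assoc_superalgebra_def by auto
  have z0: "0 \<in> A0" and z1: "0 \<in> A1" using S0 S1 V.subspace_0 by auto
  define p0 where "p0 x = (THE a. a \<in> A0 \<and> x - a \<in> A1)" for x
  have uniq: "p0 x = a" if a0: "a \<in> A0" and a1: "x - a \<in> A1" for x a
  proof -
    have "\<And>a'. a' \<in> A0 \<and> x - a' \<in> A1 \<Longrightarrow> a' = a"
    proof -
      fix a' assume h: "a' \<in> A0 \<and> x - a' \<in> A1"
      have "a' - a \<in> A0" using V.subspace_diff[OF S0 _ a0] h by simp
      moreover have e: "a' - a = (x - a) - (x - a')" by (simp add: algebra_simps)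
      have "(x - a) - (x - a') \<in> A1" using V.subspace_diff[OF S1 a1, of "x - a'"] h by blast
      then have "a' - a \<in> A1" using e by metis
      ultimately have "a' - a \<in> A0 \<inter> A1" by (rule IntI)
      then have "a' - a = 0" using int by simp
      then show "a' = a" by simp
    qed
    then have "(THE a. a \<in> A0 \<and> x - a \<in> A1) = a" using a0 a1 by (intro the_equality) blast+
    then show ?thesis unfolding p0_def .
  qed
  have p0in: "p0 x \<in> A0 \<and> x - p0 x \<in> A1" for x
  proof -
    obtain a b where ab: "a \<in> A0" "b \<in> A1" "x = a + b" using dec by blast
    have xa: "x - a = b" using ab(3) by simp
    have "p0 x = a" using uniq[OF ab(1)] xa ab(2) by simp
    then show ?thesis using ab(1,2) xa by simp
  qed
  define p1 where "p1 x = x - p0 x" for x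
  have P0: "p0 x \<in> A0" and P1: "p1 x \<in> A1" and psum: "x = p0 x + p1 x" for x
    using p0in unfolding p1_def by auto
  have p0_A0: "x \<in> A0 \<Longrightarrow> p0 x = x" for x using uniq[of x x] z1 by simp
  have p0_A1: "x \<in> A1 \<Longrightarrow> p0 x = 0" for x using uniq[of 0 x] z0 by simp
  have p1_A0: "x \<in> A0 \<Longrightarrow> p1 x = 0" for x using p0_A0 unfolding p1_def by simp
  have p1_A1: "x \<in> A1 \<Longrightarrow> p1 x = x" for x using p0_A1 unfolding p1_def by simp
  have p0_add: "p0 (x + y) = p0 x + p0 y" for x y
  proof (rule uniq)
    show "p0 x + p0 y \<in> A0" using P0 S0 V.subspace_add by blast
    have "x + y - (p0 x + p0 y) = p1 x + p1 y" unfolding p1_def by (simp add: algebra_simps)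
    then show "x + y - (p0 x + p0 y) \<in> A1" using P1 S1 V.subspace_add by metis
  qed
  have p1_add: "p1 (x + y) = p1 x + p1 y" for x y unfolding p1_def using p0_add by (simp add: algebra_simps)
  have p0_scal: "p0 (scal c x) = scal c (p0 x)" for c x
  proof (rule uniq)
    show "scal c (p0 x) \<in> A0" using P0 S0 V.subspace_scale by blast
    have "scal c x - scal c (p0 x) = scal c (p1 x)" unfolding p1_def by (simp add: V.scale_right_diff_distrib)
    then show "scal c x - scal c (p0 x) \<in> A1" using P1 S1 V.subspace_scale by metis
  qed
  have p1_scal: "p1 (scal c x) = scal c (p1 x)" for c x unfolding p1_def using p0_scal by (simp add: V.scale_right_diff_distrib)
  have mdec: "mul x y = (mul (p0 x) (p0 y) + mul (p1 x) (p1 y)) + (mul (p0 x) (p1 y) + mul (p1 x) (p0 y))" for x y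
  proof -
    have "mul x y = mul (p0 x + p1 x) (p0 y + p1 y)" using psum by metis
    also have "\<dots> = (mul (p0 x) (p0 y) + mul (p1 x) (p1 y)) + (mul (p0 x) (p1 y) + mul (p1 x) (p0 y))"
      by (simp add: madd1 madd2 algebra_simps)
    finally show ?thesis .
  qed
  have p0_mul: "p0 (mul x y) = mul (p0 x) (p0 y) + mul (p1 x) (p1 y)" for x y
  proof (rule uniq)
    show "mul (p0 x) (p0 y) + mul (p1 x) (p1 y) \<in> A0" using P0 P1 m00 m11 S0 V.subspace_add by blast
    have "mul x y - (mul (p0 x) (p0 y) + mul (p1 x) (p1 y)) = mul (p0 x) (p1 y) + mul (p1 x) (p0 y)"
      using mdec[of x y] by (simp add: algebra_simps)
    then show "mul x y - (mul (p0 x) (p0 y) + mul (p1 x) (p1 y)) \<in> A1" using P0 P1 m01 m10 S1 V.subspace_add by metis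
  qed
  have p1_mul: "p1 (mul x y) = mul (p0 x) (p1 y) + mul (p1 x) (p0 y)" for x y
  proof -
    have "p1 (mul x y) = mul x y - p0 (mul x y)" by (simp add: p1_def)
    also have "\<dots> = ((mul (p0 x) (p0 y) + mul (p1 x) (p1 y)) + (mul (p0 x) (p1 y) + mul (p1 x) (p0 y))) - (mul (p0 x) (p0 y) + mul (p1 x) (p1 y))"
      by (subst p0_mul, subst mdec[of x y], rule refl)
    also have "\<dots> = mul (p0 x) (p1 y) + mul (p1 x) (p0 y)" by simp
    finally show ?thesis .
  qed
  have lf0: "\<And>x. x \<in> A0 \<Longrightarrow> lin_functional_on scal A0 (phi0 x)"
    using I0 unfolding bimodule_iso_to_dual_def by auto
  have a01: "\<And>x y z. x \<in> A0 \<Longrightarrow> y \<in> A0 \<Longrightarrow> z \<in> A0 \<Longrightarrow> phi0 (x + y) z = phi0 x z + phi0 y z"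
    using I0 unfolding bimodule_iso_to_dual_def by auto
  have s01: "\<And>c x z. x \<in> A0 \<Longrightarrow> z \<in> A0 \<Longrightarrow> phi0 (scal c x) z = c * phi0 x z"
    using I0 unfolding bimodule_iso_to_dual_def by auto
  have inj0: "\<And>x. x \<in> A0 \<Longrightarrow> (\<forall>z\<in>A0. phi0 x z = 0) \<Longrightarrow> x = 0"
    using I0 unfolding bimodule_iso_to_dual_def by auto
  have bl0: "\<And>a x y. a \<in> A0 \<Longrightarrow> x \<in> A0 \<Longrightarrow> y \<in> A0 \<Longrightarrow> phi0 (mul a x) y = phi0 x (mul y a)"
    using I0 unfolding bimodule_iso_to_dual_def by auto
  have br0: "\<And>a x y. a \<in> A0 \<Longrightarrow> x \<in> A0 \<Longrightarrow> y \<in> A0 \<Longrightarrow> phi0 (mul x a) y = phi0 x (mul a y)"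
    using I0 unfolding bimodule_iso_to_dual_def by auto
  have lf1: "\<And>x. x \<in> A1 \<Longrightarrow> lin_functional_on scal A1 (phi1 x)"
    using I1 unfolding bimodule_iso_to_dual_def by auto
  have a11: "\<And>x y z. x \<in> A1 \<Longrightarrow> y \<in> A1 \<Longrightarrow> z \<in> A1 \<Longrightarrow> phi1 (x + y) z = phi1 x z + phi1 y z"
    using I1 unfolding bimodule_iso_to_dual_def by auto
  have s11: "\<And>c x z. x \<in> A1 \<Longrightarrow> z \<in> A1 \<Longrightarrow> phi1 (scal c x) z = c * phi1 x z"
    using I1 unfolding bimodule_iso_to_dual_def by auto
  have inj1: "\<And>x. x \<in> A1 \<Longrightarrow> (\<forall>z\<in>A1. phi1 x z = 0) \<Longrightarrow> x = 0"
    using I1 unfolding bimodule_iso_to_dual_def by auto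
  have bl1: "\<And>a x y. a \<in> A0 \<Longrightarrow> x \<in> A1 \<Longrightarrow> y \<in> A1 \<Longrightarrow> phi1 (mul a x) y = phi1 x (mul y a)"
    using I1 unfolding bimodule_iso_to_dual_def by auto
  have br1: "\<And>a x y. a \<in> A0 \<Longrightarrow> x \<in> A1 \<Longrightarrow> y \<in> A1 \<Longrightarrow> phi1 (mul x a) y = phi1 x (mul a y)"
    using I1 unfolding bimodule_iso_to_dual_def by auto
  have a02: "\<And>x y z. x \<in> A0 \<Longrightarrow> y \<in> A0 \<Longrightarrow> z \<in> A0 \<Longrightarrow> phi0 x (y + z) = phi0 x y + phi0 x z"
    using lf0 unfolding lin_functional_on_def by auto
  have s02: "\<And>c x z. x \<in> A0 \<Longrightarrow> z \<in> A0 \<Longrightarrow> phi0 x (scal c z) = c * phi0 x z"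
    using lf0 unfolding lin_functional_on_def by auto
  have a12: "\<And>x y z. x \<in> A1 \<Longrightarrow> y \<in> A1 \<Longrightarrow> z \<in> A1 \<Longrightarrow> phi1 x (y + z) = phi1 x y + phi1 x z"
    using lf1 unfolding lin_functional_on_def by auto
  have s12: "\<And>c x z. x \<in> A1 \<Longrightarrow> z \<in> A1 \<Longrightarrow> phi1 x (scal c z) = c * phi1 x z"
    using lf1 unfolding lin_functional_on_def by auto
  have ph0z1: "phi0 0 z = 0" if "z \<in> A0" for z using a01[OF z0 z0 that] by (metis add.right_neutral add_left_cancel)
  have ph0z2: "phi0 x 0 = 0" if "x \<in> A0" for x using a02[OF that z0 z0] by (metis add.right_neutral add_left_cancel)
  have ph1z1: "phi1 0 z = 0" if "z \<in> A1" for z using a11[OF z1 z1 that] by (metis add.right_neutral add_left_cancel)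
  have ph1z2: "phi1 x 0 = 0" if "x \<in> A1" for x using a12[OF that z1 z1] by (metis add.right_neutral add_left_cancel)
  define B where "B x y = phi0 (p0 x) (p0 y) + phi1 (p1 x) (p1 y)" for x y
  have "even_symmetric_structure scal mul A0 A1 B"
    unfolding even_symmetric_structure_def
  proof (intro conjI allI ballI impI)
    fix x y z show "B (x + y) z = B x z + B y z"
      unfolding B_def p0_add p1_add using P0 P1 a01 a11 by simp
  next
    fix x y z show "B x (y + z) = B x y + B x z"
      unfolding B_def p0_add p1_add using P0 P1 a02 a12 by simp
  next
    fix c x y show "B (scal c x) y = c * B x y"
      unfolding B_def p0_scal p1_scal using P0 P1 s01 s11 by (simp add: distrib_left)
  next
    fix c x y show "B x (scal c y) = c * B x y"
      unfolding B_def p0_scal p1_scal using P0 P1 s02 s12 by (simp add: distrib_left)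
  next
    fix x y assume "x \<in> A0" "y \<in> A1" then show "B x y = 0"
      unfolding B_def using p0_A0 p1_A0 p0_A1 p1_A1 ph0z2 ph1z1 by simp
  next
    fix x y assume "x \<in> A1" "y \<in> A0" then show "B x y = 0"
      unfolding B_def using p0_A0 p1_A0 p0_A1 p1_A1 ph0z1 ph1z2 by simp
  next
    fix x y assume "x \<in> A0" "y \<in> A0 \<union> A1" then show "B x y = B y x"
      unfolding B_def using p0_A0 p1_A0 p0_A1 p1_A1 ph0z1 ph1z2 ph0z2 ph1z1 sym0 z0 z1 by auto
  next
    fix x y assume "x \<in> A1" "y \<in> A0" then show "B x y = B y x"
      unfolding B_def using p0_A0 p1_A0 p0_A1 p1_A1 ph0z1 ph1z2 ph0z2 ph1z1 by simp
  next
    fix x y show "x \<in> A1 \<Longrightarrow> y \<in> A1 \<Longrightarrow> B x y = - B y x"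
    proof -
      assume xy: "x \<in> A1" "y \<in> A1"
      have "phi1 x y = - phi1 y x" using asym1 xy by blast
      then show ?thesis unfolding B_def using p0_A1 p1_A1 ph0z1 z0 xy by simp
    qed
  next
    fix x y z
    let ?x0 = "p0 x" and ?x1 = "p1 x" and ?y0 = "p0 y" and ?y1 = "p1 y" and ?z0 = "p0 z" and ?z1 = "p1 z"
    have e1: "phi0 (mul ?x0 ?y0) ?z0 = phi0 ?x0 (mul ?y0 ?z0)" using br0 P0 by blast
    have e2: "phi1 (mul ?x0 ?y1) ?z1 = phi0 ?x0 (mul ?y1 ?z1)" using comp P0 P1 by blast
    have e3: "phi1 (mul ?x1 ?y0) ?z1 = phi1 ?x1 (mul ?y0 ?z1)" using br1 P0 P1 by blast
    have e4: "phi0 (mul ?x1 ?y1) ?z0 = phi1 ?x1 (mul ?y1 ?z0)"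
    proof -
      have "phi0 (mul ?x1 ?y1) ?z0 = phi0 ?z0 (mul ?x1 ?y1)" using sym0 P0 P1 m11 by blast
      also have "\<dots> = phi1 (mul ?z0 ?x1) ?y1" using comp P0 P1 by metis
      also have "\<dots> = - phi1 ?y1 (mul ?z0 ?x1)" using asym1 P0 P1 m01 by blast
      also have "\<dots> = - phi1 (mul ?y1 ?z0) ?x1" using br1 P0 P1 by metis
      also have "\<dots> = phi1 ?x1 (mul ?y1 ?z0)" using asym1 P0 P1 m10 by (metis minus_minus)
      finally show ?thesis .
    qed
    have "B (mul x y) z = phi0 (mul ?x0 ?y0) ?z0 + phi0 (mul ?x1 ?y1) ?z0 + (phi1 (mul ?x0 ?y1) ?z1 + phi1 (mul ?x1 ?y0) ?z1)"
      unfolding B_def p0_mul p1_mul using a01 a11 P0 P1 m00 m11 m01 m10 by simp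
    also have "\<dots> = phi0 ?x0 (mul ?y0 ?z0) + phi1 ?x1 (mul ?y1 ?z0) + (phi0 ?x0 (mul ?y1 ?z1) + phi1 ?x1 (mul ?y0 ?z1))"
      using e1 e2 e3 e4 by simp
    also have "\<dots> = B x (mul y z)"
      unfolding B_def p0_mul p1_mul using a02 a12 P0 P1 m00 m11 m01 m10 by simp
    finally show "B (mul x y) z = B x (mul y z)" .
  next
    fix x assume h: "\<forall>y. B x y = 0"
    have "\<forall>z\<in>A0. phi0 (p0 x) z = 0"
    proof
      fix z assume "z \<in> A0" then show "phi0 (p0 x) z = 0" using h[rule_format, of z] P1
        unfolding B_def using p0_A0 p1_A0 ph1z2 by simp
    qed
    then have "p0 x = 0" using inj0 P0 by blast
    moreover have "\<forall>z\<in>A1. phi1 (p1 x) z = 0"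
    proof
      fix z assume "z \<in> A1" then show "phi1 (p1 x) z = 0" using h[rule_format, of z] P0
        unfolding B_def using p0_A1 p1_A1 ph0z2 by simp
    qed
    then have "p1 x = 0" using inj1 P1 by blast
    ultimately show "x = 0" using psum[of x] by simp
  qed
  then show ?thesis by blast
qed



lemma forward:
  fixes scal :: "'k::field \<Rightarrow> 'a::ab_group_add \<Rightarrow> 'a"
  assumes FDm: "fin_dim scal" and SA: "assoc_superalgebra scal mul A0 A1"
    and ES: "even_symmetric_structure scal mul A0 A1 B"
  shows "bimodule_iso_to_dual scal mul A0 A0 B \<and> bimodule_iso_to_dual scal mul A0 A1 B \<and>
       (\<forall>x\<in>A0. \<forall>y\<in>A0. B x y = B y x) \<and>
       (\<forall>x\<in>A1. \<forall>y\<in>A1. B x y = - B y x) \<and>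
       (\<forall>x\<in>A0. \<forall>y\<in>A1. \<forall>z\<in>A1. B (mul x y) z = B x (mul y z))"
proof -
  interpret V: vector_space scal using SA unfolding assoc_superalgebra_def by auto
  obtain Bs where Bs: "finite Bs" "V.span Bs = UNIV" using FDm unfolding fin_dim_def by auto
  obtain Bi where Bi: "Bi \<subseteq> Bs" "V.independent Bi" "Bs \<subseteq> V.span Bi"
    using V.maximal_independent_subset[of Bs] by blast
  have "V.span Bi = UNIV"
    using V.span_mono[OF Bi(3)] Bs(2) V.span_span[of Bi] by auto
  moreover have "finite Bi" using Bi(1) Bs(1) finite_subset by blast
  ultimately interpret FD: finite_dimensional_vector_space scal Bi
    using Bi(2) by unfold_locales auto
  have S0: "V.subspace A0"
    using SA unfolding assoc_superalgebra_def by auto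
  have S1: "V.subspace A1"
    using SA unfolding assoc_superalgebra_def by auto
  have dec: "\<And>x. \<exists>a\<in>A0. \<exists>b\<in>A1. x = a + b"
    using SA unfolding assoc_superalgebra_def by auto
  have m00: "\<And>x y. x \<in> A0 \<Longrightarrow> y \<in> A0 \<Longrightarrow> mul x y \<in> A0"
    using SA unfolding assoc_superalgebra_def by auto
  have m01: "\<And>x y. x \<in> A0 \<Longrightarrow> y \<in> A1 \<Longrightarrow> mul x y \<in> A1"
    using SA unfolding assoc_superalgebra_def by auto
  have m10: "\<And>x y. x \<in> A1 \<Longrightarrow> y \<in> A0 \<Longrightarrow> mul x y \<in> A1"
    using SA unfolding assoc_superalgebra_def by auto
  have b1: "\<And>x y z. B (x + y) z = B x z + B y z"
    using ES unfolding even_symmetric_structure_def by auto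
  have b2: "\<And>x y z. B x (y + z) = B x y + B x z"
    using ES unfolding even_symmetric_structure_def by auto
  have b3: "\<And>c x y. B (scal c x) y = c * B x y"
    using ES unfolding even_symmetric_structure_def by auto
  have b4: "\<And>c x y. B x (scal c y) = c * B x y"
    using ES unfolding even_symmetric_structure_def by auto
  have ev1: "\<And>x y. x \<in> A0 \<Longrightarrow> y \<in> A1 \<Longrightarrow> B x y = 0"
    using ES unfolding even_symmetric_structure_def by auto
  have ev2: "\<And>x y. x \<in> A1 \<Longrightarrow> y \<in> A0 \<Longrightarrow> B x y = 0"
    using ES unfolding even_symmetric_structure_def by auto
  have sy0: "\<And>x y. x \<in> A0 \<Longrightarrow> y \<in> A0 \<union> A1 \<Longrightarrow> B x y = B y x"
    using ES unfolding even_symmetric_structure_def by blast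
  have sy1: "\<And>x y. x \<in> A1 \<Longrightarrow> y \<in> A1 \<Longrightarrow> B x y = - B y x"
    using ES unfolding even_symmetric_structure_def by blast
  have as: "\<And>x y z. B (mul x y) z = B x (mul y z)"
    using ES unfolding even_symmetric_structure_def by blast
  have nd: "\<And>x. (\<forall>y. B x y = 0) \<Longrightarrow> x = 0"
    using ES unfolding even_symmetric_structure_def by blast
  have lf: "lin_functional_on scal S (B x)" for S x
    unfolding lin_functional_on_def using b2 b4 by auto
  have inj0: "\<forall>x\<in>A0. (\<forall>z\<in>A0. B x z = 0) \<longrightarrow> x = 0"
  proof (intro ballI impI)
    fix x assume x: "x \<in> A0" and h: "\<forall>z\<in>A0. B x z = 0"
    have "\<forall>y. B x y = 0"
    proof
      fix y obtain a b where "a \<in> A0" "b \<in> A1" "y = a + b" using dec by blast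
      then show "B x y = 0" using b2 h ev1[OF x] by simp
    qed
    then show "x = 0" by (rule nd)
  qed
  have inj1: "\<forall>x\<in>A1. (\<forall>z\<in>A1. B x z = 0) \<longrightarrow> x = 0"
  proof (intro ballI impI)
    fix x assume x: "x \<in> A1" and h: "\<forall>z\<in>A1. B x z = 0"
    have "\<forall>y. B x y = 0"
    proof
      fix y obtain a b where "a \<in> A0" "b \<in> A1" "y = a + b" using dec by blast
      then show "B x y = 0" using b2 h ev2[OF x] by simp
    qed
    then show "x = 0" by (rule nd)
  qed
  have I0: "bimodule_iso_to_dual scal mul A0 A0 B"
    unfolding bimodule_iso_to_dual_def
  proof (intro conjI ballI allI impI)
    fix f assume "lin_functional_on scal A0 f"
    then show "\<exists>x\<in>A0. \<forall>z\<in>A0. B x z = f z"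
      using FD.dual_surj[OF S0, of B f] b1 b3 lf inj0 by blast
  next
    fix a x y assume h: "a \<in> A0" "x \<in> A0" "y \<in> A0"
    have "B (mul a x) y = B y (mul a x)" using sy0 m00 h by auto
    also have "\<dots> = B (mul y a) x" using as by simp
    also have "\<dots> = B x (mul y a)" using sy0 m00 h by auto
    finally show "B (mul a x) y = B x (mul y a)" .
  qed (use lf b1 b3 inj0 as in auto)
  have I1: "bimodule_iso_to_dual scal mul A0 A1 B"
    unfolding bimodule_iso_to_dual_def
  proof (intro conjI ballI allI impI)
    fix f assume "lin_functional_on scal A1 f"
    then show "\<exists>x\<in>A1. \<forall>z\<in>A1. B x z = f z"
      using FD.dual_surj[OF S1, of B f] b1 b3 lf inj1 by blast
  next
    fix a x y assume h: "a \<in> A0" "x \<in> A1" "y \<in> A1"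
    have "B (mul a x) y = - B y (mul a x)" using sy1[OF m01[OF h(1,2)] h(3)] .
    also have "\<dots> = - B (mul y a) x" using as by simp
    also have "\<dots> = B x (mul y a)" using sy1[OF h(2) m10[OF h(3,1)]] by simp
    finally show "B (mul a x) y = B x (mul y a)" .
  qed (use lf b1 b3 inj1 as in auto)
  show ?thesis using I0 I1 sy0 sy1 as by blast
qed


theorem mainTheorem1:
  fixes scal :: "'k::field_char_0 \<Rightarrow> 'a::ab_group_add \<Rightarrow> 'a"
    and mul :: "'a \<Rightarrow> 'a \<Rightarrow> 'a"
    and A0 A1 :: "'a set"
  assumes "alg_closed TYPE('k)"
    and "fin_dim scal"
    and "assoc_superalgebra scal mul A0 A1"
  shows "(\<exists>B. even_symmetric_structure scal mul A0 A1 B) \<longleftrightarrow>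
    (\<exists>phi0 phi1.
       bimodule_iso_to_dual scal mul A0 A0 phi0 \<and>
       bimodule_iso_to_dual scal mul A0 A1 phi1 \<and>
       (\<forall>x\<in>A0. \<forall>y\<in>A0. phi0 x y = phi0 y x) \<and>
       (\<forall>x\<in>A1. \<forall>y\<in>A1. phi1 x y = - phi1 y x) \<and>
       (\<forall>x\<in>A0. \<forall>y\<in>A1. \<forall>z\<in>A1. phi1 (mul x y) z = phi0 x (mul y z)))"
proof
  assume "\<exists>B. even_symmetric_structure scal mul A0 A1 B"
  then obtain B where "even_symmetric_structure scal mul A0 A1 B" by blast
  from forward[OF assms(2,3) this] show "\<exists>phi0 phi1.
       bimodule_iso_to_dual scal mul A0 A0 phi0 \<and>
       bimodule_iso_to_dual scal mul A0 A1 phi1 \<and>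
       (\<forall>x\<in>A0. \<forall>y\<in>A0. phi0 x y = phi0 y x) \<and>
       (\<forall>x\<in>A1. \<forall>y\<in>A1. phi1 x y = - phi1 y x) \<and>
       (\<forall>x\<in>A0. \<forall>y\<in>A1. \<forall>z\<in>A1. phi1 (mul x y) z = phi0 x (mul y z))" by blast
next
  assume "\<exists>phi0 phi1.
       bimodule_iso_to_dual scal mul A0 A0 phi0 \<and>
       bimodule_iso_to_dual scal mul A0 A1 phi1 \<and>
       (\<forall>x\<in>A0. \<forall>y\<in>A0. phi0 x y = phi0 y x) \<and>
       (\<forall>x\<in>A1. \<forall>y\<in>A1. phi1 x y = - phi1 y x) \<and>
       (\<forall>x\<in>A0. \<forall>y\<in>A1. \<forall>z\<in>A1. phi1 (mul x y) z = phi0 x (mul y z))"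
  then obtain phi0 phi1 where h: "bimodule_iso_to_dual scal mul A0 A0 phi0"
       "bimodule_iso_to_dual scal mul A0 A1 phi1"
       "\<forall>x\<in>A0. \<forall>y\<in>A0. phi0 x y = phi0 y x"
       "\<forall>x\<in>A1. \<forall>y\<in>A1. phi1 x y = - phi1 y x"
       "\<forall>x\<in>A0. \<forall>y\<in>A1. \<forall>z\<in>A1. phi1 (mul x y) z = phi0 x (mul y z)" by blast
  show "\<exists>B. even_symmetric_structure scal mul A0 A1 B"
    by (rule backward[OF assms(3) h])
qed

end
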